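(* Let $N\ge 1$, let $f:Z[1,N]\times\mathbb{R}\to\mathbb{R}$ be continuous in its second variable for every $k\in Z[1,N]$, and let $p:Z[1,N+2]\to\mathbb{R}$, $q:Z[1,N+1]\to\mathbb{R}$. Assume that (1) there exists $m>0$ such that $s f(k,s)\ge 0$ for all $|s|\ge m$ and $k\in Z[1,N]$; (2) $\eta'(p)\,p_{\min}-\eta(q)\,q_{\max}>0$; that $s\mapsto f(k,s)$ is non-decreasing for every $k\in Z[1,N]$, and that $p_{\min}\eta'(p)>q_{\max}\eta(q)$. Then the boundary value problem $$\Delta^2\big(p(k)\Delta^2 y(k-2)\big)+\Delta\big(q(k)\Delta y(k-1)\big)+f(k,y(k))=0\ \ (k\in Z[1,N]),\qquad y(-1)=y(0)=y(N+1)=y(N+2)=0$$ has exactly one solution.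
   Context: $Z[a,b]=[a,b]\cap\mathbb{Z}$; $\Delta x(k)=x(k+1)-x(k)$, $\Delta^2=\Delta\circ\Delta$; $\Delta^2(p(k)\Delta^2y(k-2))$ means $\Delta^2$ applied to $k\mapsto p(k)\Delta^2 y(k-2)$, similarly for $\Delta(q(k)\Delta y(k-1))$. A solution is a function $y:Z[-1,N+2]\to\mathbb{R}$ satisfying the equation and boundary conditions. $p_{\min}=\min_{Z[1,N+2]}p$, $q_{\max}=\max_{Z[1,N+1]}q$. Let $E=\{y:Z[-1,N+2]\to\mathbb{R}\mid y(-1)=y(0)=y(N+1)=y(N+2)=0\}$ and $\tilde y=(y(1),\dots,y(N))^T$; let $V$ be the $(N+1)\times N$ matrix with $V\tilde y=(\Delta y(0),\dots,\Delta y(N))^T$ and $W$ the $(N+2)\times N$ matrix with $W\tilde y=(\Delta^2y(-1),\dots,\Delta^2y(N))^T$ for $y\in E$; $\lambda_1$, $\lambda_2$ are the smallest eigenvalues of $V^TV$ and $W^TW$. Define $\eta'(p)=\lambda_2$ if $p_{\min}\ge 0$ and $\eta'(p)=16$ if $p_{\min}<0$; $\eta(q)=\lambda_1$ if $q_{\max}<0$ and $\eta(q)=4$ if $q_{\max}\ge 0$. *)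

theory Defs
  imports Complex_Main "Jordan_Normal_Form.Char_Poly"
begin

definition fdiff :: "(int \<Rightarrow> real) \<Rightarrow> int \<Rightarrow> real" where
  "fdiff x k = x (k + 1) - x k"

definition pmin :: "nat \<Rightarrow> (int \<Rightarrow> real) \<Rightarrow> real" where
  "pmin N p = Min (p ` {1..int N + 2})"

definition qmax :: "nat \<Rightarrow> (int \<Rightarrow> real) \<Rightarrow> real" where
  "qmax N q = Max (q ` {1..int N + 1})"

text \<open>V: (N+1) x N matrix with V ytilde = (Delta y(0),...,Delta y(N)), ytilde = (y(1),...,y(N)),
  for y vanishing at -1, 0, N+1, N+2.  Column j (0-based) corresponds to y(j+1).\<close>
definition Vmat :: "nat \<Rightarrow> real mat" where
  "Vmat N = mat (N + 1) N (\<lambda>(i, j). (if j = i then 1 else 0) - (if j + 1 = i then 1 else 0))"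

text \<open>W: (N+2) x N matrix with W ytilde = (Delta^2 y(-1),...,Delta^2 y(N)); row r is Delta^2 y(r-1).\<close>
definition Wmat :: "nat \<Rightarrow> real mat" where
  "Wmat N = mat (N + 2) N (\<lambda>(r, j). (if j = r then 1 else 0) - 2 * (if j + 1 = r then 1 else 0)
                                     + (if j + 2 = r then 1 else 0))"

definition smallest_eigenvalue :: "real mat \<Rightarrow> real" where
  "smallest_eigenvalue A = Min {l. eigenvalue A l}"

definition lambda1 :: "nat \<Rightarrow> real" where
  "lambda1 N = smallest_eigenvalue (transpose_mat (Vmat N) * Vmat N)"

definition lambda2 :: "nat \<Rightarrow> real" where
  "lambda2 N = smallest_eigenvalue (transpose_mat (Wmat N) * Wmat N)"

definition eta' :: "nat \<Rightarrow> (int \<Rightarrow> real) \<Rightarrow> real" where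
  "eta' N p = (if pmin N p \<ge> 0 then lambda2 N else 16)"

definition eta :: "nat \<Rightarrow> (int \<Rightarrow> real) \<Rightarrow> real" where
  "eta N q = (if qmax N q < 0 then lambda1 N else 4)"

definition is_solution :: "nat \<Rightarrow> (int \<Rightarrow> real) \<Rightarrow> (int \<Rightarrow> real) \<Rightarrow> (int \<Rightarrow> real \<Rightarrow> real)
                           \<Rightarrow> (int \<Rightarrow> real) \<Rightarrow> bool" where
  "is_solution N p q f y \<longleftrightarrow>
     (\<forall>k \<in> {1..int N}.
        fdiff (fdiff (\<lambda>j. p j * fdiff (fdiff y) (j - 2))) k
        + fdiff (\<lambda>j. q j * fdiff y (j - 1)) k + f k (y k) = 0)
     \<and> y (-1) = 0 \<and> y 0 = 0 \<and> y (int N + 1) = 0 \<and> y (int N + 2) = 0"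

end

theory Submission
  imports Defs "HOL-Analysis.Function_Topology" "HOL-Analysis.Convex"
begin

definition quadf :: "nat \<Rightarrow> (nat \<Rightarrow> nat \<Rightarrow> real) \<Rightarrow> (nat \<Rightarrow> real) \<Rightarrow> real" where
 "quadf n a x = (\<Sum>i<n. x i * (\<Sum>j<n. a i j * x j))"
definition nrm2 :: "nat \<Rightarrow> (nat \<Rightarrow> real) \<Rightarrow> real" where "nrm2 n x = (\<Sum>i<n. (x i)^2)"

lemma quadf_scale: "quadf n a (\<lambda>i. c * x i) = c^2 * quadf n a x"
  by (simp add: quadf_def sum_distrib_left algebra_simps power2_eq_square)

lemma nrm2_scale: "nrm2 n (\<lambda>i. c * x i) = c^2 * nrm2 n x"
  by (simp add: nrm2_def sum_distrib_left algebra_simps power2_eq_square)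

lemma quadf_cong: "(\<And>i. i < n \<Longrightarrow> x i = y i) \<Longrightarrow> quadf n a x = quadf n a y"
  unfolding quadf_def by (intro sum.cong refl) auto

lemma nrm2_cong: "(\<And>i. i < n \<Longrightarrow> x i = y i) \<Longrightarrow> nrm2 n x = nrm2 n y"
  unfolding nrm2_def by (intro sum.cong refl) auto

lemma cont_quadf: "continuous_on UNIV (quadf n a)"
  unfolding quadf_def
  by (intro continuous_intros continuous_on_product_coordinates)

lemma cont_nrm2: "continuous_on UNIV (nrm2 n)"
  unfolding nrm2_def
  by (intro continuous_intros continuous_on_product_coordinates)

lemma compact_K:
  "compact {x::nat\<Rightarrow>real. (\<forall>i. x i \<in> (if i < n then {-1..1} else {0})) \<and> nrm2 n x = 1}"
proof -
  define S :: "nat \<Rightarrow> real set" where "S = (\<lambda>i. if i < n then {-1..1} else {0})"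
  have "compactin (product_topology (\<lambda>i. euclidean) UNIV) (PiE UNIV S)"
    unfolding compactin_PiE by (auto simp: S_def)
  hence c1: "compact (PiE UNIV S)"
    by (simp add: euclidean_product_topology)
  have c2: "closed {x::nat\<Rightarrow>real. nrm2 n x = 1}"
    by (rule closed_Collect_eq) (auto intro: cont_nrm2)
  have e: "PiE UNIV S \<inter> {x. nrm2 n x = 1} = {x. (\<forall>i. x i \<in> S i) \<and> nrm2 n x = 1}"
    by (auto simp: PiE_iff)
  have "compact {x. (\<forall>i. x i \<in> S i) \<and> nrm2 n x = 1}"
    using compact_Int_closed[OF c1 c2] unfolding e .
  thus ?thesis unfolding S_def .
qed

lemma sum_delta_lt: "k < (n::nat) \<Longrightarrow> (\<Sum>j<n. if j = k then f j else (0::real)) = f k"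
  by (subst sum.delta) auto

lemma sum_delta_mult: "k < (n::nat) \<Longrightarrow> (\<Sum>j<n. c j * (if j = k then t else 0)) = c k * (t::real)"
proof -
  assume k: "k < n"
  have "(\<Sum>j<n. c j * (if j = k then t else 0)) = (\<Sum>j<n. if j = k then c k * t else 0)"
    by (rule sum.cong) auto
  also have "\<dots> = c k * t" using k by (rule sum_delta_lt)
  finally show ?thesis .
qed

lemma sum_delta_mult2: "k < (n::nat) \<Longrightarrow> (\<Sum>j<n. (if j = k then t else 0) * c j) = t * (c k::real)"
proof -
  assume k: "k < n"
  have "(\<Sum>j<n. (if j = k then t else 0) * c j) = (\<Sum>j<n. if j = k then t * c k else 0)"
    by (rule sum.cong) auto
  also have "\<dots> = t * c k" using k by (rule sum_delta_lt)
  finally show ?thesis .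
qed

lemma quadf_unit:
  assumes k: "k < n" and sym: "\<And>i j. i < n \<Longrightarrow> j < n \<Longrightarrow> a i j = a j i"
  shows "quadf n a (\<lambda>i. x i + (if i = k then t else 0))
       = quadf n a x + 2*t*(\<Sum>j<n. a k j * x j) + t^2 * a k k"
proof -
  have inner: "(\<Sum>j<n. a i j * (x j + (if j = k then t else 0))) = (\<Sum>j<n. a i j * x j) + a i k * t" for i
    using k by (simp add: distrib_left sum.distrib sum_delta_mult)
  have s1: "(\<Sum>i<n. x i * a i k) = (\<Sum>j<n. a k j * x j)"
    by (rule sum.cong) (auto simp: sym k)
  have "quadf n a (\<lambda>i. x i + (if i = k then t else 0))
     = (\<Sum>i<n. (x i + (if i = k then t else 0)) * ((\<Sum>j<n. a i j * x j) + a i k * t))"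
    unfolding quadf_def inner ..
  also have "\<dots> = (\<Sum>i<n. x i * (\<Sum>j<n. a i j * x j)) + t * (\<Sum>i<n. x i * a i k)
       + (\<Sum>i<n. (if i = k then t else 0) * ((\<Sum>j<n. a i j * x j) + a i k * t))"
    by (simp add: distrib_right distrib_left sum.distrib sum_distrib_left mult_ac)
  also have "(\<Sum>i<n. (if i = k then t else 0) * ((\<Sum>j<n. a i j * x j) + a i k * t))
     = t * ((\<Sum>j<n. a k j * x j) + a k k * t)"
    using k by (rule sum_delta_mult2)
  also have "(\<Sum>i<n. x i * (\<Sum>j<n. a i j * x j)) + t * (\<Sum>i<n. x i * a i k) + t * ((\<Sum>j<n. a k j * x j) + a k k * t)
     = quadf n a x + 2*t*(\<Sum>j<n. a k j * x j) + t^2 * a k k"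
    unfolding s1 quadf_def by (simp add: algebra_simps power2_eq_square)
  finally show ?thesis .
qed

lemma nrm2_unit:
  assumes k: "k < n"
  shows "nrm2 n (\<lambda>i. x i + (if i = k then t else 0)) = nrm2 n x + 2*t*x k + t^2"
proof -
  have "nrm2 n (\<lambda>i. x i + (if i = k then t else 0))
      = (\<Sum>i<n. (x i)^2 + ((if i = k then 2 * t * x i + t^2 else 0)))"
    unfolding nrm2_def by (rule sum.cong) (auto simp: power2_eq_square algebra_simps)
  also have "\<dots> = nrm2 n x + 2*t*x k + t^2"
    using k by (simp add: sum.distrib nrm2_def sum.delta)
  finally show ?thesis .
qed

lemma quad_lin_zero:
  fixes b g :: real
  assumes "\<And>t. 0 \<le> 2*t*b + t^2 * g"
  shows "b = 0"
proof (rule ccontr)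
  assume b: "b \<noteq> 0"
  define s where "s = \<bar>g\<bar> + 1"
  have pos: "s > 0" "g < 2 * s" unfolding s_def by auto
  define t where "t = - b / s"
  have "2*t*b + t^2 * g = b^2 / s^2 * (g - 2*s)"
    unfolding t_def using pos by (simp add: field_simps power2_eq_square)
  also have "\<dots> < 0"
    using b pos by (intro mult_pos_neg) auto
  finally show False using assms[of t] by simp
qed

lemma nrm2_nonneg: "nrm2 n x \<ge> 0"
  unfolding nrm2_def by (intro sum_nonneg) auto

lemma nrm2_zero: "nrm2 n x = 0 \<Longrightarrow> i < n \<Longrightarrow> x i = 0"
  unfolding nrm2_def by (subst (asm) sum_nonneg_eq_0_iff) auto

lemma rayleigh:
  fixes a :: "nat \<Rightarrow> nat \<Rightarrow> real"
  assumes n: "n \<ge> 1" and sym: "\<And>i j. i < n \<Longrightarrow> j < n \<Longrightarrow> a i j = a j i"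
  shows "\<exists>\<mu> x. (\<forall>i<n. (\<Sum>j<n. a i j * x j) = \<mu> * x i) \<and> (\<exists>i<n. x i \<noteq> 0)
              \<and> (\<forall>y. \<mu> * nrm2 n y \<le> quadf n a y)"
proof -
  define K where "K = {x::nat\<Rightarrow>real. (\<forall>i. x i \<in> (if i < n then {-1..1} else {0})) \<and> nrm2 n x = 1}"
  have "(\<Sum>i<n. ((\<lambda>i::nat. if i = 0 then (1::real) else 0) i)^2) = (\<Sum>i<n. if i = 0 then 1 else 0)"
    by (rule sum.cong) auto
  also have "\<dots> = 1" using n by (intro sum_delta_lt) auto
  finally have "(\<lambda>i::nat. if i = 0 then (1::real) else 0) \<in> K"
    unfolding K_def nrm2_def using n by auto
  hence Kne: "K \<noteq> {}" by auto
  obtain x0 where x0: "x0 \<in> K" and min: "\<And>y. y \<in> K \<Longrightarrow> quadf n a x0 \<le> quadf n a y"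
    using continuous_attains_inf[OF compact_K[of n, folded K_def] Kne continuous_on_subset[OF cont_quadf]]
    by blast
  define \<mu> where "\<mu> = quadf n a x0"
  have nx0: "nrm2 n x0 = 1" using x0 by (simp add: K_def)
  have lb: "\<mu> * nrm2 n y \<le> quadf n a y" for y
  proof (cases "nrm2 n y = 0")
    case True
    hence "quadf n a y = quadf n a (\<lambda>_. 0)" by (intro quadf_cong) (auto dest: nrm2_zero)
    also have "\<dots> = 0" by (simp add: quadf_def)
    finally show ?thesis using True by simp
  next
    case False
    hence pos: "nrm2 n y > 0" using nrm2_nonneg[of n y] by linarith
    define r where "r = sqrt (nrm2 n y)"
    have r: "r > 0" "r^2 = nrm2 n y" unfolding r_def using pos by auto
    define z where "z = (\<lambda>i. if i < n then y i / r else 0)"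
    have zb: "\<bar>y i\<bar> \<le> r" if "i < n" for i
    proof -
      have "(y i)^2 \<le> nrm2 n y" unfolding nrm2_def
        by (rule member_le_sum) (use that in auto)
      thus ?thesis unfolding r_def by (metis real_sqrt_abs real_sqrt_le_mono)
    qed
    have nz: "nrm2 n z = nrm2 n (\<lambda>i. (1/r) * y i)" by (rule nrm2_cong) (simp add: z_def)
    also have "\<dots> = (1/r)^2 * nrm2 n y" by (rule nrm2_scale)
    also have "\<dots> = 1" using r pos by (simp add: power_divide)
    moreover have "z i \<in> (if i < n then {-1..1} else {0})" for i
    proof (cases "i < n")
      case True
      have h: "\<bar>y i\<bar> \<le> r" using zb[OF True] .
      have "y i / r \<le> 1" "- 1 \<le> y i / r" using h r by (auto simp: divide_le_eq le_divide_eq abs_le_iff)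
      thus ?thesis using True by (simp add: z_def)
    qed (simp add: z_def)
    ultimately have "z \<in> K" unfolding K_def by auto
    hence "\<mu> \<le> quadf n a z" using min \<mu>_def by auto
    also have "quadf n a z = quadf n a (\<lambda>i. (1/r) * y i)" by (rule quadf_cong) (simp add: z_def)
    also have "\<dots> = (1/r)^2 * quadf n a y" by (rule quadf_scale)
    also have "\<dots> = quadf n a y / r^2" by (simp add: power_divide)
    finally have "\<mu> \<le> quadf n a y / r^2" .
    hence "\<mu> * r^2 \<le> quadf n a y" using r pos by (simp add: pos_le_divide_eq)
    thus ?thesis using r by simp
  qed
  have eig: "(\<Sum>j<n. a k j * x0 j) = \<mu> * x0 k" if k: "k < n" for k
  proof -
    have "0 \<le> 2*t*((\<Sum>j<n. a k j * x0 j) - \<mu> * x0 k) + t^2 * (a k k - \<mu>)" for t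
    proof -
      have "\<mu> * nrm2 n (\<lambda>i. x0 i + (if i = k then t else 0)) \<le> quadf n a (\<lambda>i. x0 i + (if i = k then t else 0))"
        by (rule lb)
      moreover have "quadf n a (\<lambda>i. x0 i + (if i = k then t else 0)) = quadf n a x0 + 2*t*(\<Sum>j<n. a k j * x0 j) + t^2 * a k k"
        using k sym by (rule quadf_unit)
      ultimately show ?thesis unfolding nrm2_unit[OF k] nx0 \<mu>_def[symmetric]
        by (simp add: algebra_simps)
    qed
    thus ?thesis using quad_lin_zero[of "(\<Sum>j<n. a k j * x0 j) - \<mu> * x0 k" "a k k - \<mu>"] by simp
  qed
  have nz: "\<exists>i<n. x0 i \<noteq> 0"
  proof (rule ccontr)
    assume "\<not> (\<exists>i<n. x0 i \<noteq> 0)"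
    hence "nrm2 n x0 = nrm2 n (\<lambda>_. 0)" by (intro nrm2_cong) auto
    thus False using nx0 by (simp add: nrm2_def)
  qed
  show ?thesis using eig nz lb by blast
qed

lemma min_eig_bound:
  fixes B :: "real mat"
  assumes n: "n \<ge> 1" and B: "B \<in> carrier_mat m n"
  shows "smallest_eigenvalue (transpose_mat B * B) * nrm2 n x
         \<le> quadf n (\<lambda>i j. (transpose_mat B * B) $$ (i,j)) x"
proof -
  define M where "M = transpose_mat B * B"
  have M: "M \<in> carrier_mat n n" unfolding M_def using B by auto
  have tM: "transpose_mat M = M" unfolding M_def using B
    by (simp add: transpose_mult[of _ n m _ n])
  have sym: "M $$ (i,j) = M $$ (j,i)" if "i < n" "j < n" for i j
  proof -
    have "M $$ (i,j) = transpose_mat M $$ (i,j)" using tM by simp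
    also have "\<dots> = M $$ (j,i)" using that M by simp
    finally show ?thesis .
  qed
  obtain \<mu> x0 where ev: "\<forall>i<n. (\<Sum>j<n. M $$ (i,j) * x0 j) = \<mu> * x0 i"
    and nz: "\<exists>i<n. x0 i \<noteq> 0" and lb: "\<forall>y. \<mu> * nrm2 n y \<le> quadf n (\<lambda>i j. M $$ (i,j)) y"
    using rayleigh[OF n, of "\<lambda>i j. M $$ (i,j)"] sym by blast
  define v where "v = Matrix.vec n x0"
  have v: "v \<in> carrier_vec n" unfolding v_def by simp
  have v0: "v \<noteq> 0\<^sub>v n" using nz unfolding v_def by (auto simp: vec_eq_iff)
  have Mv: "M *\<^sub>v v = \<mu> \<cdot>\<^sub>v v"
  proof (rule eq_vecI)
    show "dim_vec (M *\<^sub>v v) = dim_vec (\<mu> \<cdot>\<^sub>v v)" using M v by simp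
    fix i assume "i < dim_vec (\<mu> \<cdot>\<^sub>v v)"
    hence i: "i < n" using v by simp
    have "(M *\<^sub>v v) $ i = row M i \<bullet> v" using M i by simp
    also have "\<dots> = (\<Sum>j<n. M $$ (i,j) * x0 j)"
      unfolding scalar_prod_def using M i v by (simp add: v_def atLeast0LessThan)
    also have "\<dots> = (\<mu> \<cdot>\<^sub>v v) $ i" using ev i by (simp add: v_def)
    finally show "(M *\<^sub>v v) $ i = (\<mu> \<cdot>\<^sub>v v) $ i" .
  qed
  have eig: "eigenvalue M \<mu>" unfolding eigenvalue_def eigenvector_def
    using v v0 Mv M by auto
  have "degree (char_poly M) = n" using degree_monic_char_poly[OF M] by simp
  hence "char_poly M \<noteq> 0" using n by auto
  hence fin: "finite {l. eigenvalue M l}"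
    unfolding eigenvalue_root_char_poly[OF M] by (rule poly_roots_finite)
  have "smallest_eigenvalue M \<le> \<mu>" unfolding smallest_eigenvalue_def
    using fin eig by (intro Min_le) auto
  hence "smallest_eigenvalue M * nrm2 n x \<le> \<mu> * nrm2 n x"
    using nrm2_nonneg[of n x] by (intro mult_right_mono)
  also have "\<dots> \<le> quadf n (\<lambda>i j. M $$ (i,j)) x" using lb by blast
  finally show ?thesis unfolding M_def .
qed

definition supp :: "nat \<Rightarrow> (int \<Rightarrow> real) \<Rightarrow> bool" where
  "supp N y \<longleftrightarrow> (\<forall>k. (k < 1 \<or> k > int N) \<longrightarrow> y k = 0)"

lemma ivl_Suc_int: "{1..int (Suc N)} = insert (int N + 1) {1..int N}"
  by auto

lemma abel_sum:
  fixes y b :: "int \<Rightarrow> real"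
  shows
  "(\<Sum>k\<in>{1..int N}. y k * (b (k+1) - b k)) + (\<Sum>j\<in>{1..int N + 1}. b j * (y j - y (j-1)))
   = b (int N + 1) * y (int N + 1) - b 1 * y 0"
proof (induction N)
  case 0
  then show ?case by (simp add: right_diff_distrib)
next
  case (Suc N)
  have e1: "{1..int (Suc N) + 1} = insert (int N + 2) {1..int N + 1}" by auto
  have "(\<Sum>k\<in>{1..int (Suc N)}. y k * (b (k+1) - b k)) + (\<Sum>j\<in>{1..int (Suc N) + 1}. b j * (y j - y (j-1)))
     = ((\<Sum>k\<in>{1..int N}. y k * (b (k+1) - b k)) + (\<Sum>j\<in>{1..int N + 1}. b j * (y j - y (j-1))))
       + y (int N + 1) * (b (int N + 2) - b (int N + 1)) + b (int N + 2) * (y (int N + 2) - y (int N + 1))"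
    unfolding ivl_Suc_int e1 by (simp add: algebra_simps)
  also have "\<dots> = b (int (Suc N) + 1) * y (int (Suc N) + 1) - b 1 * y 0"
    unfolding Suc.IH by (simp add: algebra_simps of_nat_Suc)
  finally show ?case .
qed

lemma abel_supp:
  fixes b :: "int \<Rightarrow> real"
  assumes "supp N y"
  shows "(\<Sum>k\<in>{1..int N}. y k * (b (k+1) - b k)) = - (\<Sum>j\<in>{1..int N + 1}. b j * (y j - y (j-1)))"
proof -
  have "y (int N + 1) = 0" "y 0 = 0" using assms by (auto simp: supp_def)
  thus ?thesis using abel_sum[where N=N and y=y and b=b] by simp
qed

definition Lop :: "(int \<Rightarrow> real) \<Rightarrow> (int \<Rightarrow> real) \<Rightarrow> (int \<Rightarrow> real) \<Rightarrow> int \<Rightarrow> real" where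
  "Lop p q y k = fdiff (fdiff (\<lambda>j. p j * fdiff (fdiff y) (j - 2))) k + fdiff (\<lambda>j. q j * fdiff y (j - 1)) k"

lemma quad_identity:
  assumes "supp N y"
  shows "(\<Sum>k\<in>{1..int N}. y k * Lop p q y k)
       = (\<Sum>i\<in>{1..int N + 2}. p i * (fdiff (fdiff y) (i - 2))^2) - (\<Sum>j\<in>{1..int N + 1}. q j * (fdiff y (j - 1))^2)"
proof -
  define a where "a = (\<lambda>j. p j * fdiff (fdiff y) (j - 2))"
  define b where "b = (\<lambda>j. q j * fdiff y (j - 1))"
  define z where "z = (\<lambda>j. y j - y (j - 1))"
  have zs: "supp (N+1) z" using assms unfolding supp_def z_def by auto
  have t1: "(\<Sum>k\<in>{1..int N}. y k * fdiff (fdiff a) k) = (\<Sum>i\<in>{1..int N + 2}. a i * (z i - z (i - 1)))"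
  proof -
    have "(\<Sum>k\<in>{1..int N}. y k * fdiff (fdiff a) k) = - (\<Sum>j\<in>{1..int N + 1}. fdiff a j * z j)"
      using abel_supp[OF assms, of "fdiff a"] unfolding fdiff_def z_def by simp
    also have "(\<Sum>j\<in>{1..int N + 1}. fdiff a j * z j) = (\<Sum>j\<in>{1..int (N+1)}. z j * (a (j+1) - a j))"
      unfolding fdiff_def by (simp add: mult.commute add.commute)
    also have "\<dots> = - (\<Sum>i\<in>{1..int (N+1) + 1}. a i * (z i - z (i - 1)))"
      by (rule abel_supp[OF zs])
    also have "int (N+1) + 1 = int N + 2" by simp
    finally show ?thesis by simp
  qed
  have t2: "(\<Sum>k\<in>{1..int N}. y k * fdiff b k) = - (\<Sum>j\<in>{1..int N + 1}. b j * z j)"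
    using abel_supp[OF assms, of b] unfolding fdiff_def z_def by simp
  have "(\<Sum>k\<in>{1..int N}. y k * Lop p q y k)
      = (\<Sum>k\<in>{1..int N}. y k * fdiff (fdiff a) k) + (\<Sum>k\<in>{1..int N}. y k * fdiff b k)"
    unfolding Lop_def a_def b_def by (simp add: distrib_left sum.distrib)
  also have "\<dots> = (\<Sum>i\<in>{1..int N + 2}. a i * (z i - z (i - 1))) - (\<Sum>j\<in>{1..int N + 1}. b j * z j)"
    unfolding t1 t2 by simp
  also have "\<dots> = (\<Sum>i\<in>{1..int N + 2}. p i * (fdiff (fdiff y) (i - 2))^2) - (\<Sum>j\<in>{1..int N + 1}. q j * (fdiff y (j - 1))^2)"
    unfolding a_def b_def z_def fdiff_def by (simp add: power2_eq_square algebra_simps)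
  finally show ?thesis .
qed

lemma sum_nat_int: "(\<Sum>r<M. g (int r)) = (\<Sum>i\<in>{1..int M}. g (i - 1))"
proof (induction M)
  case 0 then show ?case by simp
next
  case (Suc M)
  show ?case unfolding ivl_Suc_int lessThan_Suc using Suc by (simp add: add.commute)
qed

lemma sum_shift_int: "(\<Sum>i\<in>{a..b}. h (i - s)) = (\<Sum>k\<in>{a-s..b-(s::int)}. h k)"
proof -
  have im: "(\<lambda>i. i - s) ` {a..b} = {a-s..b-s}"
    using image_add_atLeastAtMost'[of "-s" a b] by simp
  have "(\<Sum>k\<in>{a-s..b-s}. h k) = sum h ((\<lambda>i. i - s) ` {a..b})" unfolding im ..
  also have "\<dots> = (\<Sum>i\<in>{a..b}. h (i - s))" by (subst sum.reindex) (auto simp: inj_on_def)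
  finally show ?thesis by simp
qed

lemma supp_sq_shift:
  assumes "supp N y" "a \<le> 1 + s" "int N + s \<le> b"
  shows "(\<Sum>i\<in>{a..b}. (y (i - s))^2) = (\<Sum>k\<in>{1..int N}. (y k)^2)"
proof -
  have "(\<Sum>i\<in>{a..b}. (y (i - s))^2) = (\<Sum>k\<in>{a-s..b-s}. (y k)^2)" by (rule sum_shift_int)
  also have "\<dots> = (\<Sum>k\<in>{1..int N}. (y k)^2)"
    by (rule sum.mono_neutral_right) (use assms in \<open>auto simp: supp_def\<close>)
  finally show ?thesis .
qed

lemma sq3: "(a - 2*b + c)^2 + ((a + 2*b + c)^2 + 2*(a-c)^2) = 4*a^2 + 8*b^2 + 4*(c::real)^2"
  by (simp add: power2_eq_square algebra_simps)
lemma sq3': "(a - 2*b + c)^2 \<le> 4*a^2 + 8*b^2 + 4*(c::real)^2"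
proof -
  have "0 \<le> (a + 2*b + c)^2 + 2*(a-c)^2" by simp
  thus ?thesis using sq3[of a b c] by linarith
qed
lemma sq2': "(a - b)^2 \<le> 2*a^2 + 2*(b::real)^2"
proof -
  have "(a - b)^2 + (a+b)^2 = 2*a^2 + 2*b^2" by (simp add: power2_eq_square algebra_simps)
  moreover have "0 \<le> (a+b)^2" by simp
  ultimately show ?thesis by linarith
qed

lemma S1_upper:
  assumes "supp N y"
  shows "(\<Sum>j\<in>{1..int N + 1}. (fdiff y (j - 1))^2) \<le> 4 * (\<Sum>k\<in>{1..int N}. (y k)^2)"
proof -
  have "(\<Sum>j\<in>{1..int N + 1}. (fdiff y (j - 1))^2)
      \<le> (\<Sum>j\<in>{1..int N + 1}. 2 * (y (j - 0))^2 + 2 * (y (j - 1))^2)"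
    by (rule sum_mono) (simp add: fdiff_def sq2')
  also have "\<dots> = 2 * (\<Sum>j\<in>{1..int N + 1}. (y (j - 0))^2) + 2 * (\<Sum>j\<in>{1..int N + 1}. (y (j - 1))^2)"
    by (simp add: sum.distrib sum_distrib_left)
  also have "\<dots> = 4 * (\<Sum>k\<in>{1..int N}. (y k)^2)"
    using supp_sq_shift[OF assms, of 1 0 "int N + 1"] supp_sq_shift[OF assms, of 1 1 "int N + 1"] by simp
  finally show ?thesis .
qed

lemma S2_upper:
  assumes "supp N y"
  shows "(\<Sum>i\<in>{1..int N + 2}. (fdiff (fdiff y) (i - 2))^2) \<le> 16 * (\<Sum>k\<in>{1..int N}. (y k)^2)"
proof -
  have "(\<Sum>i\<in>{1..int N + 2}. (fdiff (fdiff y) (i - 2))^2)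
      \<le> (\<Sum>i\<in>{1..int N + 2}. 4 * (y (i - 0))^2 + 8 * (y (i - 1))^2 + 4 * (y (i - 2))^2)"
  proof (rule sum_mono)
    fix i
    have e: "fdiff (fdiff y) (i - 2) = y i - 2 * y (i - 1) + y (i - 2)"
      by (simp add: fdiff_def algebra_simps)
    have "(y i - 2 * y (i - 1) + y (i - 2))^2 \<le> 4 * (y i)^2 + 8 * (y (i - 1))^2 + 4 * (y (i - 2))^2"
      by (rule sq3')
    thus "(fdiff (fdiff y) (i - 2))^2 \<le> 4 * (y (i - 0))^2 + 8 * (y (i - 1))^2 + 4 * (y (i - 2))^2"
      unfolding e by simp
  qed
  also have "\<dots> = 4 * (\<Sum>i\<in>{1..int N + 2}. (y (i - 0))^2) + 8 * (\<Sum>i\<in>{1..int N + 2}. (y (i - 1))^2)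
       + 4 * (\<Sum>i\<in>{1..int N + 2}. (y (i - 2))^2)"
    by (simp add: sum.distrib sum_distrib_left)
  also have "\<dots> = 16 * (\<Sum>k\<in>{1..int N}. (y k)^2)"
    using supp_sq_shift[OF assms, of 1 0 "int N + 2"] supp_sq_shift[OF assms, of 1 1 "int N + 2"]
      supp_sq_shift[OF assms, of 1 2 "int N + 2"] by simp
  finally show ?thesis .
qed

lemma BtB_entry:
  fixes B :: "real mat"
  assumes B: "B \<in> carrier_mat m n" and "i < n" "j < n"
  shows "(transpose_mat B * B) $$ (i,j) = (\<Sum>r<m. B $$ (r,i) * B $$ (r,j))"
  using assms by (simp add: scalar_prod_def atLeast0LessThan)

lemma quadf_BtB:
  fixes B :: "real mat"
  assumes B: "B \<in> carrier_mat m n"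
  shows "quadf n (\<lambda>i j. (transpose_mat B * B) $$ (i,j)) x = (\<Sum>r<m. (\<Sum>i<n. B $$ (r,i) * x i)^2)"
proof -
  have e: "x i * (\<Sum>j<n. (transpose_mat B * B) $$ (i,j) * x j)
      = (\<Sum>j<n. \<Sum>r<m. (B $$ (r,i) * x i) * (B $$ (r,j) * x j))" if i: "i < n" for i
  proof -
    have "(\<Sum>j<n. (transpose_mat B * B) $$ (i,j) * x j) = (\<Sum>j<n. (\<Sum>r<m. B $$ (r,i) * B $$ (r,j)) * x j)"
      using i by (intro sum.cong refl) (simp add: BtB_entry[OF B])
    thus ?thesis by (simp add: sum_distrib_left sum_distrib_right mult_ac)
  qed
  have "quadf n (\<lambda>i j. (transpose_mat B * B) $$ (i,j)) x
      = (\<Sum>i<n. \<Sum>j<n. \<Sum>r<m. (B $$ (r,i) * x i) * (B $$ (r,j) * x j))"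
    unfolding quadf_def by (rule sum.cong[OF refl]) (simp add: e)
  also have "\<dots> = (\<Sum>i<n. \<Sum>r<m. \<Sum>j<n. (B $$ (r,i) * x i) * (B $$ (r,j) * x j))"
    by (rule sum.cong[OF refl]) (rule sum.swap)
  also have "\<dots> = (\<Sum>r<m. \<Sum>i<n. \<Sum>j<n. (B $$ (r,i) * x i) * (B $$ (r,j) * x j))"
    by (rule sum.swap)
  also have "\<dots> = (\<Sum>r<m. (\<Sum>i<n. B $$ (r,i) * x i)^2)"
    by (simp add: power2_eq_square sum_product)
  finally show ?thesis .
qed

lemma sum_if_shift:
  fixes N d r :: nat
  shows
  "(\<Sum>i<N. if i + d = r then g i else (0::real)) = (if d \<le> r \<and> r - d < N then g (r - d) else 0)"
proof -
  have "(\<Sum>i<N. if i + d = r then g i else (0::real)) = (\<Sum>i<N. if d \<le> r \<and> i = r - d then g (r - d) else 0)"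
    by (rule sum.cong) auto
  also have "\<dots> = (if d \<le> r \<and> r - d < N then g (r - d) else 0)"
    by (cases "d \<le> r") (simp_all add: sum.delta)
  finally show ?thesis .
qed

lemma V_row:
  assumes "supp N y" "r < N + 1"
  shows "(\<Sum>i<N. Vmat N $$ (r,i) * y (int i + 1)) = fdiff y (int r)"
proof -
  have "(\<Sum>i<N. Vmat N $$ (r,i) * y (int i + 1))
      = (\<Sum>i<N. if i + 0 = r then y (int i + 1) else 0) - (\<Sum>i<N. if i + 1 = r then y (int i + 1) else 0)"
    unfolding sum_subtractf[symmetric] using assms(2)
    by (intro sum.cong refl) (auto simp: Vmat_def)
  also have "\<dots> = y (int r + 1) - y (int r)"
    unfolding sum_if_shift using assms by (auto simp: supp_def of_nat_diff)
  finally show ?thesis by (simp add: fdiff_def)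
qed

lemma W_row:
  assumes "supp N y" "r < N + 2"
  shows "(\<Sum>i<N. Wmat N $$ (r,i) * y (int i + 1)) = fdiff (fdiff y) (int r - 1)"
proof -
  have "(\<Sum>i<N. Wmat N $$ (r,i) * y (int i + 1))
      = (\<Sum>i<N. if i + 0 = r then y (int i + 1) else 0) - 2 * (\<Sum>i<N. if i + 1 = r then y (int i + 1) else 0)
        + (\<Sum>i<N. if i + 2 = r then y (int i + 1) else 0)"
    unfolding sum_distrib_left sum_subtractf[symmetric] sum.distrib[symmetric] using assms(2)
    by (intro sum.cong refl) (auto simp: Wmat_def)
  also have "\<dots> = y (int r + 1) - 2 * y (int r) + y (int r - 1)"
    unfolding sum_if_shift using assms by (auto simp: supp_def of_nat_diff)
  finally show ?thesis by (simp add: fdiff_def algebra_simps)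
qed

lemma Vmat_carrier: "Vmat N \<in> carrier_mat (N+1) N" by (simp add: Vmat_def)
lemma Wmat_carrier: "Wmat N \<in> carrier_mat (N+2) N" by (simp add: Wmat_def)

lemma nrm2_supp: "nrm2 N (\<lambda>i. y (int i + 1)) = (\<Sum>k\<in>{1..int N}. (y k)^2)"
  unfolding nrm2_def using sum_nat_int[of "\<lambda>k. (y (k + 1))^2" N] by simp

lemma S1_lower:
  assumes N: "N \<ge> 1" and s: "supp N y"
  shows "lambda1 N * (\<Sum>k\<in>{1..int N}. (y k)^2) \<le> (\<Sum>j\<in>{1..int N + 1}. (fdiff y (j - 1))^2)"
proof -
  have "lambda1 N * nrm2 N (\<lambda>i. y (int i + 1))
     \<le> quadf N (\<lambda>i j. (transpose_mat (Vmat N) * Vmat N) $$ (i,j)) (\<lambda>i. y (int i + 1))"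
    unfolding lambda1_def by (rule min_eig_bound[OF N Vmat_carrier])
  also have "\<dots> = (\<Sum>r<N+1. (\<Sum>i<N. Vmat N $$ (r,i) * y (int i + 1))^2)"
    by (rule quadf_BtB[OF Vmat_carrier])
  also have "\<dots> = (\<Sum>r<N+1. (fdiff y (int r))^2)"
    by (intro sum.cong refl) (simp add: V_row[OF s])
  also have "\<dots> = (\<Sum>j\<in>{1..int N + 1}. (fdiff y (j - 1))^2)"
    using sum_nat_int[of "\<lambda>k. (fdiff y k)^2" "N+1"] by (simp only: of_nat_add of_nat_1)
  finally show ?thesis unfolding nrm2_supp .
qed

lemma S2_lower:
  assumes N: "N \<ge> 1" and s: "supp N y"
  shows "lambda2 N * (\<Sum>k\<in>{1..int N}. (y k)^2) \<le> (\<Sum>i\<in>{1..int N + 2}. (fdiff (fdiff y) (i - 2))^2)"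
proof -
  have "lambda2 N * nrm2 N (\<lambda>i. y (int i + 1))
     \<le> quadf N (\<lambda>i j. (transpose_mat (Wmat N) * Wmat N) $$ (i,j)) (\<lambda>i. y (int i + 1))"
    unfolding lambda2_def by (rule min_eig_bound[OF N Wmat_carrier])
  also have "\<dots> = (\<Sum>r<N+2. (\<Sum>i<N. Wmat N $$ (r,i) * y (int i + 1))^2)"
    by (rule quadf_BtB[OF Wmat_carrier])
  also have "\<dots> = (\<Sum>r<N+2. (fdiff (fdiff y) (int r - 1))^2)"
    by (intro sum.cong refl) (simp add: W_row[OF s])
  also have "\<dots> = (\<Sum>i\<in>{1..int N + 2}. (fdiff (fdiff y) (i - 2))^2)"
    using sum_nat_int[of "\<lambda>k. (fdiff (fdiff y) (k - 1))^2" "N+2"]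
    by (simp only: of_nat_add of_nat_numeral diff_diff_eq one_add_one)
  finally show ?thesis unfolding nrm2_supp .
qed

lemma coercive:
  assumes N: "N \<ge> 1" and s: "supp N y"
  shows "(eta' N p * pmin N p - eta N q * qmax N q) * (\<Sum>k\<in>{1..int N}. (y k)^2)
         \<le> (\<Sum>k\<in>{1..int N}. y k * Lop p q y k)"
proof -
  define Y where "Y = (\<Sum>k\<in>{1..int N}. (y k)^2)"
  define S1 where "S1 = (\<Sum>j\<in>{1..int N + 1}. (fdiff y (j - 1))^2)"
  define S2 where "S2 = (\<Sum>i\<in>{1..int N + 2}. (fdiff (fdiff y) (i - 2))^2)"
  have pm: "pmin N p \<le> p i" if "i \<in> {1..int N + 2}" for i
    unfolding pmin_def using that by (intro Min_le) auto
  have qm: "q j \<le> qmax N q" if "j \<in> {1..int N + 1}" for j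
    unfolding qmax_def using that by (intro Max_ge) auto
  have A: "pmin N p * S2 \<le> (\<Sum>i\<in>{1..int N + 2}. p i * (fdiff (fdiff y) (i - 2))^2)"
    unfolding S2_def sum_distrib_left by (intro sum_mono mult_right_mono pm) auto
  have B: "(\<Sum>j\<in>{1..int N + 1}. q j * (fdiff y (j - 1))^2) \<le> qmax N q * S1"
    unfolding S1_def sum_distrib_left by (intro sum_mono mult_right_mono qm) auto
  have C: "eta' N p * pmin N p * Y \<le> pmin N p * S2"
  proof (cases "pmin N p \<ge> 0")
    case True
    have "lambda2 N * Y \<le> S2" unfolding Y_def S2_def by (rule S2_lower[OF N s])
    hence "pmin N p * (lambda2 N * Y) \<le> pmin N p * S2" using True by (intro mult_left_mono) auto
    thus ?thesis using True by (simp add: eta'_def mult_ac)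
  next
    case False
    have "S2 \<le> 16 * Y" unfolding Y_def S2_def by (rule S2_upper[OF s])
    hence "pmin N p * (16 * Y) \<le> pmin N p * S2" using False by (intro mult_left_mono_neg) auto
    thus ?thesis using False by (simp add: eta'_def mult_ac)
  qed
  have D: "qmax N q * S1 \<le> eta N q * qmax N q * Y"
  proof (cases "qmax N q < 0")
    case True
    have "lambda1 N * Y \<le> S1" unfolding Y_def S1_def by (rule S1_lower[OF N s])
    hence "qmax N q * S1 \<le> qmax N q * (lambda1 N * Y)" using True by (intro mult_left_mono_neg) auto
    thus ?thesis using True by (simp add: eta_def mult_ac)
  next
    case False
    have "S1 \<le> 4 * Y" unfolding Y_def S1_def by (rule S1_upper[OF s])
    hence "qmax N q * S1 \<le> qmax N q * (4 * Y)" using False by (intro mult_left_mono) auto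
    thus ?thesis using False by (simp add: eta_def mult_ac)
  qed
  have "(\<Sum>k\<in>{1..int N}. y k * Lop p q y k)
      = (\<Sum>i\<in>{1..int N + 2}. p i * (fdiff (fdiff y) (i - 2))^2) - (\<Sum>j\<in>{1..int N + 1}. q j * (fdiff y (j - 1))^2)"
    by (rule quad_identity[OF s])
  thus ?thesis using A B C D unfolding Y_def[symmetric] by (simp add: algebra_simps)
qed

lemma mono_prod: "mono (g :: real \<Rightarrow> real) \<Longrightarrow> 0 \<le> (x - y) * (g x - g y)"
proof (cases "x \<le> y")
  case True
  assume m: "mono g"
  hence "g x \<le> g y" using True by (simp add: monoD)
  thus ?thesis using True by (simp add: mult_nonpos_nonpos)
next
  case False
  assume m: "mono g"
  hence "g y \<le> g x" using False by (simp add: monoD)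
  thus ?thesis using False by simp
qed

lemma isCont_bound:
  fixes h g :: "real \<Rightarrow> real"
  assumes g: "isCont g t0" and K: "K \<ge> 0"
    and b: "\<And>s. \<bar>h s - h t0\<bar> \<le> K * \<bar>s - t0\<bar> + \<bar>g s - g t0\<bar>"
  shows "isCont h t0"
  unfolding isCont_def LIM_eq
proof (intro allI impI)
  fix r :: real assume r: "r > 0"
  from g r obtain d1 where d1: "d1 > 0" "\<And>x. x \<noteq> t0 \<and> norm (x - t0) < d1 \<Longrightarrow> norm (g x - g t0) < r/2"
    unfolding isCont_def LIM_eq by (metis half_gt_zero)
  define d where "d = min d1 (r / (2 * (K + 1)))"
  have d: "d > 0" using d1 r K unfolding d_def by auto
  show "\<exists>s>0. \<forall>x. x \<noteq> t0 \<and> norm (x - t0) < s \<longrightarrow> norm (h x - h t0) < r"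
  proof (intro exI[of _ d] conjI allI impI d)
    fix x assume x: "x \<noteq> t0 \<and> norm (x - t0) < d"
    have "\<bar>x - t0\<bar> < r / (2 * (K + 1))" using x unfolding d_def by auto
    hence "(K + 1) * \<bar>x - t0\<bar> < r / 2" using K by (simp add: field_simps)
    moreover have "K * \<bar>x - t0\<bar> \<le> (K + 1) * \<bar>x - t0\<bar>" by (simp add: algebra_simps)
    ultimately have A: "K * \<bar>x - t0\<bar> \<le> r / 2" by linarith
    have B: "\<bar>g x - g t0\<bar> < r/2" using d1(2)[of x] x unfolding d_def by auto
    show "norm (h x - h t0) < r" using b[of x] A B by simp
  qed
qed

lemma ext_inner: "(\<Sum>j<Suc n. a j * (if j < n then x j else 0)) = (\<Sum>j<n. a j * (x j::real))"
proof -
  have "(\<Sum>j<Suc n. a j * (if j < n then x j else 0)) = (\<Sum>j<n. a j * (if j < n then x j else 0))"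
    by (simp add: sum.lessThan_Suc)
  also have "\<dots> = (\<Sum>j<n. a j * x j)" by (rule sum.cong) auto
  finally show ?thesis .
qed

lemma restrict_coer:
  assumes "\<And>x. c * nrm2 (Suc n) x \<le> quadf (Suc n) a x"
  shows "c * nrm2 n x \<le> quadf n a x"
proof -
  define x' where "x' = (\<lambda>i. if i < n then x i else 0)"
  have "nrm2 (Suc n) x' = (\<Sum>i<Suc n. (if i < n then x i else 0) * (if i < n then x i else 0))"
    unfolding nrm2_def x'_def power2_eq_square ..
  also have "\<dots> = nrm2 n x" unfolding ext_inner by (simp add: nrm2_def power2_eq_square ext_inner)
  finally have n1: "nrm2 (Suc n) x' = nrm2 n x" .
  have "quadf (Suc n) a x' = (\<Sum>i<Suc n. (if i < n then x i else 0) * (\<Sum>j<n. a i j * x j))"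
    unfolding quadf_def x'_def ext_inner ..
  also have "\<dots> = (\<Sum>i<Suc n. (\<Sum>j<n. a i j * x j) * (if i < n then x i else 0))"
    by (simp add: mult.commute)
  also have "\<dots> = quadf n a x" unfolding ext_inner quadf_def by (simp add: mult.commute)
  finally have q1: "quadf (Suc n) a x' = quadf n a x" .
  show ?thesis using assms[of x'] n1 q1 by simp
qed

lemma monotone_key:
  fixes a :: "nat \<Rightarrow> nat \<Rightarrow> real" and g :: "nat \<Rightarrow> real \<Rightarrow> real"
  assumes coer: "\<And>x. c * nrm2 m x \<le> quadf m a x"
    and mon: "\<And>i. i < m \<Longrightarrow> mono (g i)"
  shows "c * nrm2 m (\<lambda>i. u i - v i)
    \<le> (\<Sum>i<m. (u i - v i) * (((\<Sum>j<m. a i j * u j) + g i (u i)) - ((\<Sum>j<m. a i j * v j) + g i (v i))))"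
proof -
  have "(\<Sum>i<m. (u i - v i) * (((\<Sum>j<m. a i j * u j) + g i (u i)) - ((\<Sum>j<m. a i j * v j) + g i (v i))))
     = quadf m a (\<lambda>i. u i - v i) + (\<Sum>i<m. (u i - v i) * (g i (u i) - g i (v i)))"
    unfolding quadf_def sum.distrib[symmetric]
    by (intro sum.cong refl) (simp add: algebra_simps sum_subtractf)
  moreover have "0 \<le> (\<Sum>i<m. (u i - v i) * (g i (u i) - g i (v i)))"
    by (intro sum_nonneg mono_prod mon) auto
  ultimately show ?thesis using coer[of "\<lambda>i. u i - v i"] by linarith
qed

lemma exist_sol:
  fixes a :: "nat \<Rightarrow> nat \<Rightarrow> real" and g :: "nat \<Rightarrow> real \<Rightarrow> real" and c :: real
  assumes "c > 0"
    and "\<And>x. c * nrm2 n x \<le> quadf n a x"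
    and "\<And>i. i < n \<Longrightarrow> mono (g i)"
    and "\<And>i s. i < n \<Longrightarrow> isCont (g i) s"
  shows "\<exists>x. \<forall>i<n. (\<Sum>j<n. a i j * x j) + g i (x i) = 0"
  using assms
proof (induction n arbitrary: g)
  case 0 then show ?case by simp
next
  case (Suc n)
  note c = Suc.prems(1) and coer = Suc.prems(2) and mon = Suc.prems(3) and cnt = Suc.prems(4)
  have coer_n: "c * nrm2 n x \<le> quadf n a x" for x by (rule restrict_coer[OF coer])
  have ex: "\<exists>x. \<forall>i<n. (\<Sum>j<n. a i j * x j) + (\<lambda>i s. g i s + a i n * t) i (x i) = 0" for t
  proof (rule Suc.IH[OF c coer_n])
    fix i assume i: "i < n"
    show "mono ((\<lambda>i s. g i s + a i n * t) i)"
      using mon[of i] i by (auto simp: mono_def)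
    fix s show "isCont ((\<lambda>i s. g i s + a i n * t) i) s"
      using cnt[of i s] i by (auto intro!: continuous_intros)
  qed
  define X where "X t = (SOME x. \<forall>i<n. (\<Sum>j<n. a i j * x j) + (g i (x i) + a i n * t) = 0)" for t
  have X: "(\<Sum>j<n. a i j * X t j) + (g i (X t i) + a i n * t) = 0" if "i < n" for i t
  proof -
    have "\<forall>i<n. (\<Sum>j<n. a i j * X t j) + (g i (X t i) + a i n * t) = 0"
      unfolding X_def using someI_ex[OF ex[of t]] by simp
    thus ?thesis using that by blast
  qed
  define U where "U t = (\<lambda>i. if i < n then X t i else t)" for t
  define F where "F u i = (\<Sum>j<Suc n. a i j * u j) + g i (u i)" for u i
  have sumU: "(\<Sum>j<Suc n. a i j * U t j) = (\<Sum>j<n. a i j * X t j) + a i n * t" for i t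
  proof -
    have "(\<Sum>j<n. a i j * U t j) = (\<Sum>j<n. a i j * X t j)" by (rule sum.cong) (auto simp: U_def)
    thus ?thesis by (simp add: U_def)
  qed
  have FU: "F (U t) i = 0" if "i < n" for t i
    using X[OF that, of t] that unfolding F_def sumU by (simp add: U_def algebra_simps)
  define h where "h t = F (U t) n" for t
  have hmono: "c * (t - s) \<le> h t - h s" if st: "s < t" for s t
  proof -
    have "c * nrm2 (Suc n) (\<lambda>i. U t i - U s i) \<le> (\<Sum>i<Suc n. (U t i - U s i) * (F (U t) i - F (U s) i))"
      unfolding F_def by (rule monotone_key[OF coer mon])
    also have "\<dots> = (t - s) * (h t - h s)"
      using FU by (simp add: h_def U_def)
    finally have A: "c * nrm2 (Suc n) (\<lambda>i. U t i - U s i) \<le> (t - s) * (h t - h s)" .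
    have "nrm2 (Suc n) (\<lambda>i. U t i - U s i) = nrm2 n (\<lambda>i. U t i - U s i) + (t - s)^2"
      by (simp add: nrm2_def U_def)
    hence "(t - s)^2 \<le> nrm2 (Suc n) (\<lambda>i. U t i - U s i)" using nrm2_nonneg[of n] by simp
    hence "c * (t - s)^2 \<le> (t - s) * (h t - h s)" using A c
      by (meson less_imp_le mult_left_mono order_trans)
    hence "(t - s) * (c * (t - s)) \<le> (t - s) * (h t - h s)" by (simp add: power2_eq_square mult_ac)
    thus ?thesis using st by simp
  qed
  define A where "A = (\<Sum>i<n. (a i n)^2)"
  define Bn where "Bn = (\<Sum>j<n. (a n j)^2)"
  have A0: "A \<ge> 0" "Bn \<ge> 0" unfolding A_def Bn_def by (auto intro: sum_nonneg)
  define K where "K = sqrt (Bn * A) / c"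
  have K0: "K \<ge> 0" unfolding K_def using c A0 by auto
  have Rb: "\<bar>(\<Sum>j<n. a n j * (X t j - X s j))\<bar> \<le> K * \<bar>t - s\<bar>" for s t
  proof -
    define D where "D i = X t i - X s i" for i
    define S where "S = nrm2 n D"
    define P where "P = (\<Sum>i<n. D i * a i n)"
    define R where "R = (\<Sum>j<n. a n j * D j)"
    have S0: "S \<ge> 0" unfolding S_def by (rule nrm2_nonneg)
    have "c * nrm2 n (\<lambda>i. X t i - X s i)
        \<le> (\<Sum>i<n. (X t i - X s i) * (((\<Sum>j<n. a i j * X t j) + g i (X t i)) - ((\<Sum>j<n. a i j * X s j) + g i (X s i))))"
      by (rule monotone_key[OF coer_n mon]) simp
    also have "\<dots> = (\<Sum>i<n. (X t i - X s i) * (- (a i n * (t - s))))"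
    proof (rule sum.cong[OF refl])
      fix i assume "i \<in> {..<n}"
      hence i: "i < n" by simp
      show "(X t i - X s i) * (((\<Sum>j<n. a i j * X t j) + g i (X t i)) - ((\<Sum>j<n. a i j * X s j) + g i (X s i)))
          = (X t i - X s i) * (- (a i n * (t - s)))"
      proof -
        have e: "((\<Sum>j<n. a i j * X t j) + g i (X t i)) - ((\<Sum>j<n. a i j * X s j) + g i (X s i))
            = a i n * s - a i n * t" using X[OF i, of t] X[OF i, of s] by linarith
        show ?thesis unfolding e by (simp add: algebra_simps)
      qed
    qed
    also have "\<dots> = - (t - s) * P" unfolding P_def D_def sum_distrib_left
      by (intro sum.cong refl) (simp add: algebra_simps)
    finally have cS: "c * S \<le> - (t - s) * P" unfolding S_def D_def .
    have P2: "P^2 \<le> S * A" unfolding P_def S_def A_def nrm2_def by (rule Cauchy_Schwarz_ineq_sum)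
    have R2: "R^2 \<le> Bn * S" unfolding R_def S_def Bn_def nrm2_def by (rule Cauchy_Schwarz_ineq_sum)
    have cSA: "c^2 * S \<le> (t - s)^2 * A"
    proof (cases "S = 0")
      case True thus ?thesis using A0 by simp
    next
      case False
      hence Sp: "S > 0" using S0 by simp
      have "(c * S)^2 \<le> (- (t - s) * P)^2"
        using cS c S0 by (intro power_mono) auto
      also have "\<dots> = (t - s)^2 * P^2" by (simp add: power_mult_distrib power2_commute)
      also have "\<dots> \<le> (t - s)^2 * (S * A)" using P2 by (intro mult_left_mono) auto
      finally have "S * (c^2 * S) \<le> S * ((t - s)^2 * A)" by (simp add: power2_eq_square mult_ac)
      thus ?thesis using Sp by simp
    qed
    have "c^2 * R^2 \<le> c^2 * (Bn * S)" using R2 by (intro mult_left_mono) auto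
    also have "\<dots> = Bn * (c^2 * S)" by simp
    also have "\<dots> \<le> Bn * ((t - s)^2 * A)" using cSA A0 by (intro mult_left_mono) auto
    also have "\<dots> = c^2 * (K * \<bar>t - s\<bar>)^2"
      unfolding K_def using c A0 by (simp add: power_mult_distrib power_divide)
    finally have "R^2 \<le> (K * \<bar>t - s\<bar>)^2" using c by simp
    hence "\<bar>R\<bar>^2 \<le> (K * \<bar>t - s\<bar>)^2" by simp
    hence "\<bar>R\<bar> \<le> K * \<bar>t - s\<bar>" by (rule power2_le_imp_le) (use K0 in auto)
    thus ?thesis unfolding R_def D_def .
  qed
  have hdiff: "h t - h s = (\<Sum>j<n. a n j * (X t j - X s j)) + a n n * (t - s) + (g n t - g n s)" for s t
  proof -
    have "h t = (\<Sum>j<n. a n j * X t j) + a n n * t + g n t"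
      unfolding h_def F_def sumU by (simp add: U_def)
    moreover have "h s = (\<Sum>j<n. a n j * X s j) + a n n * s + g n s"
      unfolding h_def F_def sumU by (simp add: U_def)
    moreover have "(\<Sum>j<n. a n j * (X t j - X s j)) = (\<Sum>j<n. a n j * X t j) - (\<Sum>j<n. a n j * X s j)"
      by (simp add: right_diff_distrib sum_subtractf)
    ultimately show ?thesis by (simp add: algebra_simps)
  qed
  have hcont: "isCont h t0" for t0
  proof (rule isCont_bound[OF cnt[of n t0]])
    show "n < Suc n" by simp
    show "K + \<bar>a n n\<bar> \<ge> 0" using K0 by simp
    fix s
    have "\<bar>h s - h t0\<bar> \<le> \<bar>(\<Sum>j<n. a n j * (X s j - X t0 j))\<bar> + \<bar>a n n * (s - t0)\<bar> + \<bar>g n s - g n t0\<bar>"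
      unfolding hdiff by linarith
    also have "\<dots> \<le> K * \<bar>s - t0\<bar> + \<bar>a n n\<bar> * \<bar>s - t0\<bar> + \<bar>g n s - g n t0\<bar>"
      using Rb[of s t0] by (simp add: abs_mult)
    finally show "\<bar>h s - h t0\<bar> \<le> (K + \<bar>a n n\<bar>) * \<bar>s - t0\<bar> + \<bar>g n s - g n t0\<bar>"
      by (simp add: algebra_simps)
  qed
  define T where "T = \<bar>h 0\<bar> / c + 1"
  have T: "T > 0" "c * T = \<bar>h 0\<bar> + c" unfolding T_def using c by (auto simp: field_simps)
  have "c * (T - 0) \<le> h T - h 0" using hmono[of 0 T] T by simp
  hence hT: "h T \<ge> 0" using T c by simp
  have "c * (0 - (-T)) \<le> h 0 - h (-T)" using hmono[of "-T" 0] T by simp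
  hence hmT: "h (-T) \<le> 0" using T c by simp
  obtain t where t: "h t = 0" using IVT[of h "-T" 0 T] hT hmT T hcont by auto
  have "\<forall>i<Suc n. F (U t) i = 0"
  proof (intro allI impI)
    fix i assume "i < Suc n"
    thus "F (U t) i = 0" using FU[of i t] t unfolding h_def by (cases "i = n") auto
  qed
  thus ?case unfolding F_def by blast
qed

lemma Lop_explicit:
  "Lop p q y k = p (k+2) * (y (k+2) - 2 * y (k+1) + y k) - 2 * (p (k+1) * (y (k+1) - 2 * y k + y (k-1)))
     + p k * (y k - 2 * y (k-1) + y (k-2)) + q (k+1) * (y (k+1) - y k) - q k * (y k - y (k-1))"
  unfolding Lop_def fdiff_def by (simp add: algebra_simps)

lemma Lop_local:
  assumes "y (k-2) = z (k-2)" "y (k-1) = z (k-1)" "y k = z k" "y (k+1) = z (k+1)" "y (k+2) = z (k+2)"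
  shows "Lop p q y k = Lop p q z k"
  unfolding Lop_explicit assms ..

lemma Lop_add: "Lop p q (\<lambda>k. y k + z k) m = Lop p q y m + Lop p q z m"
  unfolding Lop_explicit by (simp add: algebra_simps)

lemma Lop_scale: "Lop p q (\<lambda>k. c * y k) m = c * Lop p q y m"
  unfolding Lop_explicit by (simp add: algebra_simps)

lemma Lop_diff: "Lop p q (\<lambda>k. y k - z k) m = Lop p q y m - Lop p q z m"
  unfolding Lop_explicit by (simp add: algebra_simps)

lemma Lop_zero: "Lop p q (\<lambda>k. 0) m = 0"
  unfolding Lop_explicit by simp

lemma Lop_sum:
  assumes "finite J"
  shows "Lop p q (\<lambda>k. \<Sum>j\<in>J. c j * e j k) m = (\<Sum>j\<in>J. c j * Lop p q (e j) m)"
  using assms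
proof (induction J rule: finite_induct)
  case empty then show ?case by (simp add: Lop_zero)
next
  case (insert x F)
  have "Lop p q (\<lambda>k. \<Sum>j\<in>insert x F. c j * e j k) m = Lop p q (\<lambda>k. c x * e x k + (\<Sum>j\<in>F. c j * e j k)) m"
    using insert by simp
  also have "\<dots> = c x * Lop p q (e x) m + Lop p q (\<lambda>k. \<Sum>j\<in>F. c j * e j k) m"
    by (simp add: Lop_add Lop_scale)
  finally show ?case using insert by simp
qed

lemma is_solution_iff:
  "is_solution N p q f y \<longleftrightarrow> (\<forall>k\<in>{1..int N}. Lop p q y k + f k (y k) = 0)
     \<and> y (-1) = 0 \<and> y 0 = 0 \<and> y (int N + 1) = 0 \<and> y (int N + 2) = 0"
  unfolding is_solution_def Lop_def ..

theorem theorem4: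
  fixes N :: nat and f :: "int \<Rightarrow> real \<Rightarrow> real" and p q :: "int \<Rightarrow> real"
  assumes "N \<ge> 1"
    and "\<forall>k \<in> {1..int N}. continuous_on UNIV (f k)"
    and "\<exists>m > 0. \<forall>k \<in> {1..int N}. \<forall>s. \<bar>s\<bar> \<ge> m \<longrightarrow> s * f k s \<ge> 0"
    and "eta' N p * pmin N p - eta N q * qmax N q > 0"
    and "\<forall>k \<in> {1..int N}. mono (f k)"
    and "pmin N p * eta' N p > qmax N q * eta N q"
  shows "\<exists>y. is_solution N p q f y \<and>
           (\<forall>z. is_solution N p q f z \<longrightarrow> (\<forall>k \<in> {-1..int N + 2}. z k = y k))"
proof -
  note N = assms(1) and fcont = assms(2) and fmono = assms(5)
  define c where "c = eta' N p * pmin N p - eta N q * qmax N q"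
  have c: "c > 0" using assms(4) unfolding c_def .
  have coer: "c * (\<Sum>k\<in>{1..int N}. (y k)^2) \<le> (\<Sum>k\<in>{1..int N}. y k * Lop p q y k)" if "supp N y" for y
    unfolding c_def by (rule coercive[OF N that])
  define e where "e j = (\<lambda>k. if k = int j + 1 then (1::real) else 0)" for j :: nat
  define a where "a i j = Lop p q (e j) (int i + 1)" for i j
  define g where "g i s = f (int i + 1) s" for i s
  define yof where "yof x = (\<lambda>k. \<Sum>j<N. x j * e j k)" for x :: "nat \<Rightarrow> real"
  have yof_val: "yof x (int i + 1) = x i" if "i < N" for x i
  proof -
    have "yof x (int i + 1) = (\<Sum>j<N. if j = i then x j else 0)"
      unfolding yof_def e_def by (intro sum.cong refl) auto
    also have "\<dots> = x i" using that by (rule sum_delta_lt)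
    finally show ?thesis .
  qed
  have yof_supp: "supp N (yof x)" for x
    unfolding supp_def yof_def e_def by auto
  have yof_Lop: "(\<Sum>j<N. a i j * x j) = Lop p q (yof x) (int i + 1)" for x i
    unfolding yof_def a_def by (subst Lop_sum) (auto simp: mult.commute)
  have coerN: "c * nrm2 N x \<le> quadf N a x" for x
  proof -
    have "nrm2 N x = nrm2 N (\<lambda>i. yof x (int i + 1))" by (rule nrm2_cong) (simp add: yof_val)
    also have "\<dots> = (\<Sum>k\<in>{1..int N}. (yof x k)^2)" by (rule nrm2_supp)
    finally have n1: "nrm2 N x = (\<Sum>k\<in>{1..int N}. (yof x k)^2)" .
    have "quadf N a x = (\<Sum>i<N. yof x (int i + 1) * Lop p q (yof x) (int i + 1))"
      unfolding quadf_def yof_Lop by (intro sum.cong refl) (simp add: yof_val)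
    also have "\<dots> = (\<Sum>k\<in>{1..int N}. yof x k * Lop p q (yof x) k)"
      using sum_nat_int[of "\<lambda>k. yof x (k + 1) * Lop p q (yof x) (k + 1)" N] by simp
    finally show ?thesis unfolding n1 using coer[OF yof_supp] by simp
  qed
  have gmono: "mono (g i)" if "i < N" for i
    unfolding g_def using fmono that by auto
  have gcont: "isCont (g i) s" if "i < N" for i s
  proof -
    have "continuous_on UNIV (f (int i + 1))" using fcont that by auto
    thus ?thesis unfolding g_def by (simp add: continuous_on_eq_continuous_at)
  qed
  have "\<exists>x. \<forall>i<N. (\<Sum>j<N. a i j * x j) + g i (x i) = 0"
    by (rule exist_sol[OF c coerN]) (auto intro: gmono gcont)
  then obtain x where x: "\<forall>i<N. (\<Sum>j<N. a i j * x j) + g i (x i) = 0" by blast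
  define y where "y = yof x"
  have ys: "supp N y" unfolding y_def by (rule yof_supp)
  have ysol: "is_solution N p q f y"
    unfolding is_solution_iff
  proof (intro conjI ballI)
    fix k assume k: "k \<in> {1..int N}"
    define i where "i = nat (k - 1)"
    have i: "i < N" "int i + 1 = k" using k unfolding i_def by auto
    have "(\<Sum>j<N. a i j * x j) + g i (x i) = 0" using x i by blast
    thus "Lop p q y k + f k (y k) = 0"
      unfolding yof_Lop g_def y_def using i yof_val[OF i(1), of x] by simp
  qed (use ys in \<open>auto simp: supp_def\<close>)
  have uniq: "\<forall>k \<in> {-1..int N + 2}. z k = y k" if zsol: "is_solution N p q f z" for z
  proof -
    define w where "w = (\<lambda>k. if 1 \<le> k \<and> k \<le> int N then z k else 0)"
    have ws: "supp N w" unfolding supp_def w_def by auto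
    have zw: "z k = w k" if "k \<in> {-1..int N + 2}" for k
      using zsol that unfolding is_solution_iff w_def
      by (cases "k = -1 \<or> k = 0 \<or> k = int N + 1 \<or> k = int N + 2") auto
    have Lw: "Lop p q w k = Lop p q z k" if "k \<in> {1..int N}" for k
      by (rule Lop_local) (use zw that in auto)
    define u where "u = (\<lambda>k. w k - y k)"
    have us: "supp N u" using ws ys unfolding supp_def u_def by auto
    have "c * (\<Sum>k\<in>{1..int N}. (u k)^2) \<le> (\<Sum>k\<in>{1..int N}. u k * Lop p q u k)" by (rule coer[OF us])
    also have "\<dots> = (\<Sum>k\<in>{1..int N}. - ((w k - y k) * (f k (w k) - f k (y k))))"
    proof (rule sum.cong[OF refl])
      fix k assume k: "k \<in> {1..int N}"
      have "Lop p q u k = Lop p q w k - Lop p q y k" unfolding u_def by (rule Lop_diff)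
      also have "\<dots> = - f k (z k) + f k (y k)"
        using Lw[OF k] zsol ysol k unfolding is_solution_iff by force
      also have "z k = w k" using zw k by auto
      finally have L: "Lop p q u k = f k (y k) - f k (w k)" by simp
      show "u k * Lop p q u k = - ((w k - y k) * (f k (w k) - f k (y k)))"
        unfolding L by (simp add: u_def algebra_simps)
    qed
    also have "\<dots> \<le> 0"
      using fmono by (intro sum_nonpos) (auto intro!: mono_prod)
    finally have "c * (\<Sum>k\<in>{1..int N}. (u k)^2) \<le> 0" .
    hence s0: "(\<Sum>k\<in>{1..int N}. (u k)^2) \<le> 0" using c by (simp add: mult_le_0_iff)
    have u0: "u k = 0" if "k \<in> {1..int N}" for k
    proof -
      have "(\<Sum>k\<in>{1..int N}. (u k)^2) = 0" using s0 by (intro antisym s0 sum_nonneg) auto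
      hence "(u k)^2 = 0" using that by (subst (asm) sum_nonneg_eq_0_iff) auto
      thus ?thesis by simp
    qed
    show ?thesis
    proof
      fix k assume k: "k \<in> {-1..int N + 2}"
      show "z k = y k"
      proof (cases "1 \<le> k \<and> k \<le> int N")
        case True
        thus ?thesis using u0[of k] zw[OF k] unfolding u_def by auto
      next
        case False
        hence "k = -1 \<or> k = 0 \<or> k = int N + 1 \<or> k = int N + 2" using k by auto
        thus ?thesis using zsol ysol unfolding is_solution_iff by auto
      qed
    qed
  qed
  show ?thesis using ysol uniq by blast
qed

end
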